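(* Let $p,l$ be distinct odd primes and let $\Gamma=\psi(\tilde\Gamma)$ be the group described in the context. Then $\Gamma$ is commutative transitive: for all $a,b,c\in\Gamma\setminus\{1\}$, if $a$ commutes with $b$ and $b$ commutes with $c$, then $a$ commutes with $c$.
   Context: Let $p,l$ be distinct odd primes. Let $\mathbb H(\mathbb Z)$ be the ring of quaternions $x=x_0+x_1i+x_2j+x_3k$ with $x_0,\dots,x_3\in\mathbb Z$, where $i^2=j^2=k^2=-1$, $ij=-ji=k$; write $|x|^2=x_0^2+x_1^2+x_2^2+x_3^2$. Fix $c_p,d_p\in\mathbb Q_p$ with $c_p^2+d_p^2+1=0$ and $c_l,d_l\in\mathbb Q_l$ with $c_l^2+d_l^2+1=0$. Define $\psi:\mathbb H(\mathbb Z)\setminus\{0\}\to G:=PGL_2(\mathbb Q_p)\times PGL_2(\mathbb Q_l)$ by sending $x$ to the class of the pair $\left(\begin{pmatrix} x_0+x_1c_p+x_3d_p & -x_1d_p+x_2+x_3c_p\\ -x_1d_p-x_2+x_3c_p & x_0-x_1c_p-x_3d_p\end{pmatrix},\begin{pmatrix} x_0+x_1c_l+x_3d_l & -x_1d_l+x_2+x_3c_l\\ -x_1d_l-x_2+x_3c_l & x_0-x_1c_l-x_3d_l\end{pmatrix}\right)$. Let $\tilde\Gamma$ be the set of $x\in\mathbb H(\mathbb Z)$ such that $|x|^2=p^rl^s$ for some integers $r,s\ge 0$, and such that $x_0$ is odd and $x_1,x_2,x_3$ are even if $|x|^2\equiv 1\pmod 4$, while $x_1$ is even and $x_0,x_2,x_3$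 are odd if $|x|^2\equiv 3\pmod 4$. Then $\Gamma=\psi(\tilde\Gamma)$ is a torsion-free cocompact lattice in $G$. *)

theory Defs
  imports "HOL-Analysis.Analysis"
begin

text \<open>Integer quaternions x = x0 + x1 i + x2 j + x3 k, represented by their coordinates.\<close>
type_synonym hquat = "int \<times> int \<times> int \<times> int"

definition qnorm :: "hquat \<Rightarrow> int" where
  "qnorm x = (case x of (x0, x1, x2, x3) \<Rightarrow> x0^2 + x1^2 + x2^2 + x3^2)"

definition Gamma_tilde :: "nat \<Rightarrow> nat \<Rightarrow> hquat set" where
  "Gamma_tilde p l = {(x0, x1, x2, x3).
     (\<exists>r s. qnorm (x0, x1, x2, x3) = int p ^ r * int l ^ s) \<and>
     (qnorm (x0, x1, x2, x3) mod 4 = 1 \<longrightarrow> odd x0 \<and> even x1 \<and> even x2 \<and> even x3) \<and>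
     (qnorm (x0, x1, x2, x3) mod 4 = 3 \<longrightarrow> even x1 \<and> odd x0 \<and> odd x2 \<and> odd x3)}"

definition mat2 :: "'a::field \<Rightarrow> 'a \<Rightarrow> 'a \<Rightarrow> 'a \<Rightarrow> 'a^2^2" where
  "mat2 a b c d = (\<chi> i j. if i = 1 then (if j = 1 then a else b) else (if j = 1 then c else d))"

definition psi_comp :: "'a::field \<Rightarrow> 'a \<Rightarrow> hquat \<Rightarrow> 'a^2^2" where
  "psi_comp c d x = (case x of (x0, x1, x2, x3) \<Rightarrow>
     mat2 (of_int x0 + of_int x1 * c + of_int x3 * d)
          (- of_int x1 * d + of_int x2 + of_int x3 * c)
          (- of_int x1 * d - of_int x2 + of_int x3 * c)
          (of_int x0 - of_int x1 * c - of_int x3 * d))"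

text \<open>Equality of classes in PGL_2(K): the representatives differ by a nonzero scalar.\<close>
definition pgl_eq :: "'a::field^2^2 \<Rightarrow> 'a^2^2 \<Rightarrow> bool" where
  "pgl_eq A B \<longleftrightarrow> (\<exists>t. t \<noteq> 0 \<and> (\<forall>i j. A $ i $ j = t * B $ i $ j))"

text \<open>Elements of G = PGL_2(K_p) x PGL_2(K_l), given by pairs of representatives.\<close>
definition G_eq :: "(('a::field^2^2) \<times> ('b::field^2^2)) \<Rightarrow> (('a^2^2) \<times> ('b^2^2)) \<Rightarrow> bool" where
  "G_eq g h \<longleftrightarrow> pgl_eq (fst g) (fst h) \<and> pgl_eq (snd g) (snd h)"

definition G_mult :: "(('a::field^2^2) \<times> ('b::field^2^2)) \<Rightarrow> (('a^2^2) \<times> ('b^2^2)) \<Rightarrow> (('a^2^2) \<times> ('b^2^2))" where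
  "G_mult g h = (fst g ** fst h, snd g ** snd h)"

definition G_one :: "(('a::field^2^2) \<times> ('b::field^2^2))" where
  "G_one = (mat 1, mat 1)"

definition G_commute :: "(('a::field^2^2) \<times> ('b::field^2^2)) \<Rightarrow> (('a^2^2) \<times> ('b^2^2)) \<Rightarrow> bool" where
  "G_commute g h \<longleftrightarrow> G_eq (G_mult g h) (G_mult h g)"

definition psi :: "'a::field \<Rightarrow> 'a \<Rightarrow> 'b::field \<Rightarrow> 'b \<Rightarrow> hquat \<Rightarrow> (('a^2^2) \<times> ('b^2^2))" where
  "psi cp dp cl dl x = (psi_comp cp dp x, psi_comp cl dl x)"

end

theory Submission
  imports Defs
begin

lemma mat2_nth[simp]: "mat2 a b c d $ 1 $ 1 = a" "mat2 a b c d $ 1 $ 2 = b"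
  "mat2 a b c d $ 2 $ 1 = c" "mat2 a b c d $ 2 $ 2 = d"
  by (simp_all add: mat2_def)

lemma mat2_mult: "mat2 a b c d ** mat2 a' b' c' d' = mat2 (a*a'+b*c') (a*b'+b*d') (c*a'+d*c') (c*b'+d*d')"
  by (simp add: matrix_matrix_mult_def vec_eq_iff forall_2 sum_2)

lemma mat2_eq_iff: "mat2 a b c d = mat2 a' b' c' d' \<longleftrightarrow> a=a' \<and> b=b' \<and> c=c' \<and> d=d'"
  by (auto simp: vec_eq_iff forall_2)

fun qmul :: "hquat \<Rightarrow> hquat \<Rightarrow> hquat" where
 "qmul (a0,a1,a2,a3) (b0,b1,b2,b3) =
 (a0*b0 - a1*b1 - a2*b2 - a3*b3,
  a0*b1 + a1*b0 + a2*b3 - a3*b2,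
  a0*b2 - a1*b3 + a2*b0 + a3*b1,
  a0*b3 + a1*b2 - a2*b1 + a3*b0)"

lemma psi_hom:
  fixes c d :: "'a::field"
  assumes "c^2 + d^2 + 1 = 0"
  shows "psi_comp c d x ** psi_comp c d y = psi_comp c d (qmul x y)"
proof -
  obtain x0 x1 x2 x3 where x: "x = (x0,x1,x2,x3)" by (cases x) auto
  obtain y0 y1 y2 y3 where y: "y = (y0,y1,y2,y3)" by (cases y) auto
  have dd: "d^2 = -1 - c^2" using assms by (simp add: algebra_simps eq_neg_iff_add_eq_0)
  show ?thesis unfolding x y psi_comp_def
    apply (simp add: mat2_mult mat2_eq_iff of_int_mult of_int_add of_int_diff)
    using assms by (intro conjI; algebra)
qed

lemma anti_contra:
  fixes x0 x1 x2 x3 y0 y1 y2 y3 :: int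
  assumes "x0 \<noteq> 0" "y0 \<noteq> 0"
    and h0: "x0*y0 = x1*y1 + x2*y2 + x3*y3"
    and h1: "x0*y1 + x1*y0 = 0" and h2: "x0*y2 + x2*y0 = 0" and h3: "x0*y3 + x3*y0 = 0"
  shows False
proof -
  have "y0*(x0^2+x1^2+x2^2+x3^2) = x0*(x0*y0 - (x1*y1 + x2*y2 + x3*y3)) + x1*(x0*y1 + x1*y0)
     + x2*(x0*y2 + x2*y0) + x3*(x0*y3 + x3*y0)"
    by (simp add: algebra_simps power2_eq_square)
  also have "\<dots> = 0" using h0 h1 h2 h3 by simp
  finally have "y0*(x0^2+x1^2+x2^2+x3^2) = 0" .
  moreover have "x0^2+x1^2+x2^2+x3^2 > 0" using assms(1)
    by (simp add: add_pos_nonneg)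
  ultimately show False using assms(2) by simp
qed

lemma pgl_comm_cross:
  fixes c d :: "'a::field_char_0"
  assumes cd: "c^2+d^2+1=0" and x0: "x0 \<noteq> 0" and y0: "y0 \<noteq> 0"
  and pg: "pgl_eq (psi_comp c d (x0,x1,x2,x3) ** psi_comp c d (y0,y1,y2,y3))
                  (psi_comp c d (y0,y1,y2,y3) ** psi_comp c d (x0,x1,x2,x3))"
  shows "x2*y3 - x3*y2 = 0 \<and> x3*y1 - x1*y3 = 0 \<and> x1*y2 - x2*y1 = 0"
proof -
  define q0 where "q0 = x0*y0 - x1*y1 - x2*y2 - x3*y3"
  define q1 where "q1 = x0*y1 + x1*y0 + x2*y3 - x3*y2"
  define q2 where "q2 = x0*y2 - x1*y3 + x2*y0 + x3*y1"
  define q3 where "q3 = x0*y3 + x1*y2 - x2*y1 + x3*y0"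
  define r0 where "r0 = y0*x0 - y1*x1 - y2*x2 - y3*x3"
  define r1 where "r1 = y0*x1 + y1*x0 + y2*x3 - y3*x2"
  define r2 where "r2 = y0*x2 - y1*x3 + y2*x0 + y3*x1"
  define r3 where "r3 = y0*x3 + y1*x2 - y2*x1 + y3*x0"
  have qm: "qmul (x0,x1,x2,x3) (y0,y1,y2,y3) = (q0,q1,q2,q3)"
    and rm: "qmul (y0,y1,y2,y3) (x0,x1,x2,x3) = (r0,r1,r2,r3)"
    by (simp_all add: q0_def q1_def q2_def q3_def r0_def r1_def r2_def r3_def)
  from pg obtain t where t0: "t \<noteq> 0" and
    E: "\<And>i j. psi_comp c d (q0,q1,q2,q3) $ i $ j = t * psi_comp c d (r0,r1,r2,r3) $ i $ j"
    unfolding pgl_eq_def psi_hom[OF cd] qm rm by blast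
  have E11: "of_int q0 + of_int q1 * c + of_int q3 * d = t * (of_int r0 + of_int r1 * c + of_int r3 * d)"
    using E[of 1 1] by (simp add: psi_comp_def)
  have E12: "- of_int q1 * d + of_int q2 + of_int q3 * c = t * (- of_int r1 * d + of_int r2 + of_int r3 * c)"
    using E[of 1 2] by (simp add: psi_comp_def)
  have E21: "- of_int q1 * d - of_int q2 + of_int q3 * c = t * (- of_int r1 * d - of_int r2 + of_int r3 * c)"
    using E[of 2 1] by (simp add: psi_comp_def)
  have E22: "of_int q0 - of_int q1 * c - of_int q3 * d = t * (of_int r0 - of_int r1 * c - of_int r3 * d)"
    using E[of 2 2] by (simp add: psi_comp_def)
  have "2 * (of_int q0::'a) = 2 * (t * of_int r0)" using E11 E22 by algebra
  then have e0: "(of_int q0::'a) = t * of_int r0" by simp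
  have "2 * (of_int q2::'a) = 2 * (t * of_int r2)" using E12 E21 by algebra
  then have e2: "(of_int q2::'a) = t * of_int r2" by simp
  have "2 * (of_int q1::'a) = 2 * (t * of_int r1)" using E11 E22 E12 E21 cd by algebra
  then have e1: "(of_int q1::'a) = t * of_int r1" by simp
  have "2 * (of_int q3::'a) = 2 * (t * of_int r3)" using E11 E22 E12 E21 cd by algebra
  then have e3: "(of_int q3::'a) = t * of_int r3" by simp
  have qr0: "q0 = r0" by (simp add: q0_def r0_def algebra_simps)
  have normeq: "q0^2+q1^2+q2^2+q3^2 = (x0^2+x1^2+x2^2+x3^2)*(y0^2+y1^2+y2^2+y3^2)"
    unfolding q0_def q1_def q2_def q3_def by algebra
  have normeq2: "r0^2+r1^2+r2^2+r3^2 = (x0^2+x1^2+x2^2+x3^2)*(y0^2+y1^2+y2^2+y3^2)"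
    unfolding r0_def r1_def r2_def r3_def by algebra
  have npos: "(x0^2+x1^2+x2^2+x3^2)*(y0^2+y1^2+y2^2+y3^2) > 0"
    using x0 y0 by (intro mult_pos_pos; simp add: add_pos_nonneg)
  have "t = 1 \<or> t = -1"
  proof (cases "q0 = 0")
    case False
    then have "t = 1" using e0 qr0 by simp
    then show ?thesis by simp
  next
    case True
    define N where "N = (x0^2+x1^2+x2^2+x3^2)*(y0^2+y1^2+y2^2+y3^2)"
    have "(of_int N::'a) = of_int (q0^2+q1^2+q2^2+q3^2)" using normeq N_def by simp
    also have "\<dots> = t^2 * of_int (r0^2+r1^2+r2^2+r3^2)"
      using e0 e1 e2 e3 by (simp add: power_mult_distrib algebra_simps)
    also have "\<dots> = t^2 * of_int N" using normeq2 N_def by simp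
    finally have "(of_int N::'a) * (1 - t^2) = 0" by (simp add: algebra_simps)
    moreover have "N \<noteq> 0" using npos unfolding N_def by linarith
    ultimately have "t^2 = 1" by simp
    then show ?thesis by (simp add: power2_eq_1_iff)
  qed
  then show ?thesis
  proof
    assume "t = 1"
    then have "q1 = r1" "q2 = r2" "q3 = r3" using e1 e2 e3 by simp_all
    then show ?thesis by (simp add: q1_def q2_def q3_def r1_def r2_def r3_def algebra_simps)
  next
    assume "t = -1"
    then have "q0 = - r0" "q1 = - r1" "q2 = - r2" "q3 = - r3" using e0 e1 e2 e3 by (simp_all, (metis of_int_minus of_int_eq_iff)+)
    then have "x0*y0 = x1*y1 + x2*y2 + x3*y3" "x0*y1 + x1*y0 = 0" "x0*y2 + x2*y0 = 0" "x0*y3 + x3*y0 = 0"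
      by (simp_all add: q0_def q1_def q2_def q3_def r0_def r1_def r2_def r3_def algebra_simps)
    from anti_contra[OF x0 y0 this] show ?thesis ..
  qed
qed

lemma comm_of_cross:
  fixes c d :: "'a::field"
  assumes cd: "c^2+d^2+1=0"
    and h: "x2*z3 - x3*z2 = 0" "x3*z1 - x1*z3 = 0" "x1*z2 - x2*z1 = 0"
  shows "pgl_eq (psi_comp c d (x0,x1,x2,x3) ** psi_comp c d (z0,z1,z2,z3))
                  (psi_comp c d (z0,z1,z2,z3) ** psi_comp c d (x0,x1,x2,x3))"
proof -
  have eq: "qmul (x0,x1,x2,x3) (z0,z1,z2,z3) = qmul (z0,z1,z2,z3) (x0,x1,x2,x3)"
    using h by (simp add: algebra_simps)
  show ?thesis unfolding psi_hom[OF cd] eq pgl_eq_def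
    by (intro exI[of _ 1]) simp
qed

lemma G_comm_of_cross:
  fixes cp dp :: "'a::field" and cl dl :: "'b::field"
  assumes "cp^2+dp^2+1=0" "cl^2+dl^2+1=0"
    and h: "x2*z3 - x3*z2 = 0" "x3*z1 - x1*z3 = 0" "x1*z2 - x2*z1 = 0"
  shows "G_commute (psi cp dp cl dl (x0,x1,x2,x3)) (psi cp dp cl dl (z0,z1,z2,z3))"
  unfolding G_commute_def G_eq_def G_mult_def psi_def
  using comm_of_cross[OF assms(1) h] comm_of_cross[OF assms(2) h] by simp

lemma scalar_G_one:
  fixes cp dp :: "'a::field_char_0" and cl dl :: "'b::field_char_0"
  assumes "x0 \<noteq> 0"
  shows "G_eq (psi cp dp cl dl (x0,0,0,0)) G_one"
  unfolding G_eq_def psi_def G_one_def pgl_eq_def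
  using assms
  by (auto intro!: exI[of _ "of_int x0"] simp: psi_comp_def forall_2 mat_def)

lemma odd_x0:
  assumes "odd p" "odd l" "(x0,x1,x2,x3) \<in> Gamma_tilde p l"
  shows "odd x0"
proof -
  from assms(3) obtain r s where n: "qnorm (x0,x1,x2,x3) = int p ^ r * int l ^ s"
    and h1: "qnorm (x0,x1,x2,x3) mod 4 = 1 \<longrightarrow> odd x0"
    and h3: "qnorm (x0,x1,x2,x3) mod 4 = 3 \<longrightarrow> odd x0"
    unfolding Gamma_tilde_def by auto
  have "odd (qnorm (x0,x1,x2,x3))" unfolding n using assms(1,2) by simp
  then have "qnorm (x0,x1,x2,x3) mod 4 = 1 \<or> qnorm (x0,x1,x2,x3) mod 4 = 3" by presburger
  then show ?thesis using h1 h3 by blast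
qed

lemma cross_trans:
  fixes u1 u2 u3 g1 g2 g3 w1 w2 w3 :: int
  assumes "u2*g3 - u3*g2 = 0" "u3*g1 - u1*g3 = 0" "u1*g2 - u2*g1 = 0"
    and "g2*w3 - g3*w2 = 0" "g3*w1 - g1*w3 = 0" "g1*w2 - g2*w1 = 0"
    and nz: "\<not> (g1 = 0 \<and> g2 = 0 \<and> g3 = 0)"
  shows "u2*w3 - u3*w2 = 0 \<and> u3*w1 - u1*w3 = 0 \<and> u1*w2 - u2*w1 = 0"
proof -
  define n where "n = g1^2+g2^2+g3^2"
  define a where "a = u1*g1+u2*g2+u3*g3"
  define b where "b = w1*g1+w2*g2+w3*g3"
  have "n*u1 - a*g1 = g2*(u1*g2 - u2*g1) - g3*(u3*g1 - u1*g3)"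
       "n*u2 - a*g2 = g3*(u2*g3 - u3*g2) - g1*(u1*g2 - u2*g1)"
       "n*u3 - a*g3 = g1*(u3*g1 - u1*g3) - g2*(u2*g3 - u3*g2)"
       "n*w1 - b*g1 = - g2*(g1*w2 - g2*w1) + g3*(g3*w1 - g1*w3)"
       "n*w2 - b*g2 = - g3*(g2*w3 - g3*w2) + g1*(g1*w2 - g2*w1)"
       "n*w3 - b*g3 = - g1*(g3*w1 - g1*w3) + g2*(g2*w3 - g3*w2)"
    unfolding n_def a_def b_def by (simp_all add: algebra_simps power2_eq_square)
  then have U: "n*u1 = a*g1" "n*u2 = a*g2" "n*u3 = a*g3"
    and W: "n*w1 = b*g1" "n*w2 = b*g2" "n*w3 = b*g3" using assms by simp_all
  have "n > 0" using nz unfolding n_def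
    by (metis add_nonneg_nonneg add_nonneg_pos add_pos_nonneg not_less_iff_gr_or_eq
        zero_le_power2 zero_less_power2)
  have "n*n*(u2*w3 - u3*w2) = (n*u2)*(n*w3) - (n*u3)*(n*w2)" by (simp add: algebra_simps)
  also have "\<dots> = 0" unfolding U W by simp
  finally have 1: "u2*w3 - u3*w2 = 0" using \<open>n > 0\<close> by simp
  have "n*n*(u3*w1 - u1*w3) = (n*u3)*(n*w1) - (n*u1)*(n*w3)" by (simp add: algebra_simps)
  also have "\<dots> = 0" unfolding U W by simp
  finally have 2: "u3*w1 - u1*w3 = 0" using \<open>n > 0\<close> by simp
  have "n*n*(u1*w2 - u2*w1) = (n*u1)*(n*w2) - (n*u2)*(n*w1)" by (simp add: algebra_simps)
  also have "\<dots> = 0" unfolding U W by simp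
  finally have 3: "u1*w2 - u2*w1 = 0" using \<open>n > 0\<close> by simp
  show ?thesis using 1 2 3 by simp
qed

theorem proposition2p2:
  fixes p l :: nat
    and cp dp :: "'a::field_char_0"
    and cl dl :: "'b::field_char_0"
  assumes "prime p" and "prime l" and "odd p" and "odd l" and "p \<noteq> l"
    and "cp^2 + dp^2 + 1 = 0" and "cl^2 + dl^2 + 1 = 0"
  shows "\<forall>x\<in>Gamma_tilde p l. \<forall>y\<in>Gamma_tilde p l. \<forall>z\<in>Gamma_tilde p l.
           \<not> G_eq (psi cp dp cl dl x) G_one \<and> \<not> G_eq (psi cp dp cl dl y) G_one \<and>
           \<not> G_eq (psi cp dp cl dl z) G_one \<and>
           G_commute (psi cp dp cl dl x) (psi cp dp cl dl y) \<and>
           G_commute (psi cp dp cl dl y) (psi cp dp cl dl z)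
           \<longrightarrow> G_commute (psi cp dp cl dl x) (psi cp dp cl dl z)"
proof (intro ballI impI)
  fix x y z
  assume xG: "x \<in> Gamma_tilde p l" and yG: "y \<in> Gamma_tilde p l" and zG: "z \<in> Gamma_tilde p l"
  assume H: "\<not> G_eq (psi cp dp cl dl x) G_one \<and> \<not> G_eq (psi cp dp cl dl y) G_one \<and>
           \<not> G_eq (psi cp dp cl dl z) G_one \<and>
           G_commute (psi cp dp cl dl x) (psi cp dp cl dl y) \<and>
           G_commute (psi cp dp cl dl y) (psi cp dp cl dl z)"
  obtain x0 x1 x2 x3 where x: "x = (x0,x1,x2,x3)" by (cases x) auto
  obtain y0 y1 y2 y3 where y: "y = (y0,y1,y2,y3)" by (cases y) auto
  obtain z0 z1 z2 z3 where z: "z = (z0,z1,z2,z3)" by (cases z) auto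
  have x0: "x0 \<noteq> 0" using odd_x0[OF assms(3,4)] xG x by fastforce
  have y0: "y0 \<noteq> 0" using odd_x0[OF assms(3,4)] yG y by fastforce
  have z0: "z0 \<noteq> 0" using odd_x0[OF assms(3,4)] zG z by fastforce
  have nz: "\<not> (y1 = 0 \<and> y2 = 0 \<and> y3 = 0)"
    using H scalar_G_one[OF y0, of cp dp cl dl] y by auto
  have "pgl_eq (psi_comp cp dp (x0,x1,x2,x3) ** psi_comp cp dp (y0,y1,y2,y3))
                  (psi_comp cp dp (y0,y1,y2,y3) ** psi_comp cp dp (x0,x1,x2,x3))"
    using H x y by (simp add: G_commute_def G_eq_def G_mult_def psi_def)
  from pgl_comm_cross[OF assms(6) x0 y0 this]
  have c1: "x2*y3 - x3*y2 = 0 \<and> x3*y1 - x1*y3 = 0 \<and> x1*y2 - x2*y1 = 0" .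
  have "pgl_eq (psi_comp cp dp (y0,y1,y2,y3) ** psi_comp cp dp (z0,z1,z2,z3))
                  (psi_comp cp dp (z0,z1,z2,z3) ** psi_comp cp dp (y0,y1,y2,y3))"
    using H z y by (simp add: G_commute_def G_eq_def G_mult_def psi_def)
  from pgl_comm_cross[OF assms(6) y0 z0 this]
  have c2: "y2*z3 - y3*z2 = 0 \<and> y3*z1 - y1*z3 = 0 \<and> y1*z2 - y2*z1 = 0" .
  have "x2*z3 - x3*z2 = 0 \<and> x3*z1 - x1*z3 = 0 \<and> x1*z2 - x2*z1 = 0"
    using cross_trans c1 c2 nz by blast
  then show "G_commute (psi cp dp cl dl x) (psi cp dp cl dl z)"
    unfolding x z using G_comm_of_cross[OF assms(6,7)] by blast
qed

end
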